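(* Let $\Sigma$ be a set and let $A\in\mathrm{Abs}(\wp(\Sigma))$ be given by the Galois insertion $(\alpha,\wp(\Sigma),A,\gamma)$. The following are equivalent: (1) $A$ is partitioning; (2) $\gamma$ is additive and $\{\gamma(\alpha(\{s\}))\}_{s\in\Sigma}$ is a partition of $\Sigma$ (and in this case $\mathrm{par}(A)=\{\gamma(\alpha(\{s\}))\}_{s\in\Sigma}$); (3) $A$ is forward complete for the complement operator $\complement:\wp(\Sigma)\to\wp(\Sigma)$, $\complement(S)=\Sigma\setminus S$.
   Context: An abstract domain of $\wp(\Sigma)_\subseteq$ is a complete lattice $A$ with a Galois insertion $(\alpha,\wp(\Sigma),A,\gamma)$: monotone maps with $\alpha(S)\le_A a\iff S\subseteq\gamma(a)$ and $\alpha\circ\gamma=\mathrm{id}$; its closure is $\mu_A=\gamma\circ\alpha$, and domains are identified when their closures coincide ($\mathrm{Abs}(\wp(\Sigma))$). $\gamma$ is additive if it preserves arbitrary joins (unions). For a partition $P$ of $\Sigma$, $\mathrm{pad}(P)$ is the abstract domain whose closure is $S\mapsto\bigcup\{B\in P\mid B\cap S\ne\varnothing\}$; $A$ is partitioning if $\mu_A=\mathrm{pad}(P)$'s closure for some partition $P$. $\mathrm{par}(A)$ is the partition of $\Sigma$ into the classes of $s\equiv_A s'\iff\alpha(\{s\})=\alpha(\{s'\})$. $A$ is forward complete for a unary $f$ if $f\circ\mu_A=\mu_A\circ f\circ\mu_A$. *)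

theory Defs
  imports "HOL-Library.Disjoint_Sets"
begin

text \<open>Sigma is the universe of the type 'a; the abstract domain A is a complete
lattice of type 'b; (alpha, wp(Sigma), A, gamma) is a Galois insertion.\<close>

definition galois_insertion :: "('a set \<Rightarrow> 'b::complete_lattice) \<Rightarrow> ('b \<Rightarrow> 'a set) \<Rightarrow> bool" where
  "galois_insertion \<alpha> \<gamma> \<longleftrightarrow> mono \<alpha> \<and> mono \<gamma> \<and>
     (\<forall>S a. \<alpha> S \<le> a \<longleftrightarrow> S \<subseteq> \<gamma> a) \<and> \<alpha> \<circ> \<gamma> = id"

definition closure_of_gi :: "('a set \<Rightarrow> 'b) \<Rightarrow> ('b \<Rightarrow> 'a set) \<Rightarrow> 'a set \<Rightarrow> 'a set" where
  "closure_of_gi \<alpha> \<gamma> = \<gamma> \<circ> \<alpha>"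

definition pad_closure :: "'a set set \<Rightarrow> 'a set \<Rightarrow> 'a set" where
  "pad_closure P S = \<Union>{B \<in> P. B \<inter> S \<noteq> {}}"

definition partitioning :: "('a set \<Rightarrow> 'b) \<Rightarrow> ('b \<Rightarrow> 'a set) \<Rightarrow> bool" where
  "partitioning \<alpha> \<gamma> \<longleftrightarrow> (\<exists>P. partition_on UNIV P \<and> closure_of_gi \<alpha> \<gamma> = pad_closure P)"

definition additive :: "('b::complete_lattice \<Rightarrow> 'a set) \<Rightarrow> bool" where
  "additive \<gamma> \<longleftrightarrow> (\<forall>X. \<gamma> (Sup X) = \<Union>(\<gamma> ` X))"

definition par :: "('a set \<Rightarrow> 'b) \<Rightarrow> 'a set set" where
  "par \<alpha> = {{s'. \<alpha> {s'} = \<alpha> {s}} | s. True}"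

definition forward_complete :: "('a set \<Rightarrow> 'b) \<Rightarrow> ('b \<Rightarrow> 'a set) \<Rightarrow> ('a set \<Rightarrow> 'a set) \<Rightarrow> bool" where
  "forward_complete \<alpha> \<gamma> f \<longleftrightarrow>
     f \<circ> closure_of_gi \<alpha> \<gamma> = closure_of_gi \<alpha> \<gamma> \<circ> f \<circ> closure_of_gi \<alpha> \<gamma>"

end

theory Submission
  imports Defs
begin

lemma part_uniq:
  assumes "partition_on A P" "p \<in> P" "q \<in> P" "x \<in> p" "x \<in> q"
  shows "p = q"
  using assms unfolding partition_on_def pairwise_def disjnt_def by blast

locale gi =
  fixes \<alpha> :: "'a set \<Rightarrow> 'b::complete_lattice" and \<gamma> :: "'b \<Rightarrow> 'a set"
  assumes G: "galois_insertion \<alpha> \<gamma>"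
begin

lemma adj: "\<alpha> S \<le> a \<longleftrightarrow> S \<subseteq> \<gamma> a"
  using G unfolding galois_insertion_def by blast

lemma ag: "\<alpha> (\<gamma> a) = a"
  using G unfolding galois_insertion_def by (metis comp_apply id_apply)

lemma monoa: "S \<subseteq> T \<Longrightarrow> \<alpha> S \<le> \<alpha> T"
  using G unfolding galois_insertion_def mono_def by blast

lemma monog: "a \<le> b \<Longrightarrow> \<gamma> a \<le> \<gamma> b"
  using G unfolding galois_insertion_def mono_def by blast

lemma extc: "S \<subseteq> \<gamma> (\<alpha> S)"
  using adj by blast

lemma mmono: "S \<subseteq> T \<Longrightarrow> \<gamma> (\<alpha> S) \<subseteq> \<gamma> (\<alpha> T)"
  by (simp add: monoa monog)

lemma idem: "\<gamma> (\<alpha> (\<gamma> (\<alpha> S))) = \<gamma> (\<alpha> S)"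
  by (simp add: ag)

lemma closed_le: "S \<subseteq> \<gamma> (\<alpha> T) \<Longrightarrow> \<gamma> (\<alpha> S) \<subseteq> \<gamma> (\<alpha> T)"
  by (metis idem mmono)

lemma a_Sup: "\<alpha> (\<Union>F) = Sup (\<alpha> ` F)"
proof (rule antisym)
  show "\<alpha> (\<Union>F) \<le> Sup (\<alpha> ` F)"
    unfolding adj
  proof
    fix x assume "x \<in> \<Union>F"
    then obtain S where S: "S \<in> F" "x \<in> S" by blast
    have "\<alpha> S \<le> Sup (\<alpha> ` F)" using S by (simp add: Sup_upper)
    then have "S \<subseteq> \<gamma> (Sup (\<alpha> ` F))" using adj by blast
    then show "x \<in> \<gamma> (Sup (\<alpha> ` F))" using S by blast
  qed
  show "Sup (\<alpha> ` F) \<le> \<alpha> (\<Union>F)"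
    by (rule Sup_least) (auto intro: monoa)
qed

definition UP where "UP \<longleftrightarrow> (\<forall>F. \<gamma> (\<alpha> (\<Union>F)) = \<Union>((\<lambda>S. \<gamma> (\<alpha> S)) ` F))"

lemma add_UP: "additive \<gamma> \<longleftrightarrow> UP"
proof
  assume A: "additive \<gamma>"
  show UP unfolding UP_def
  proof
    fix F :: "'a set set"
    have "\<gamma> (\<alpha> (\<Union>F)) = \<gamma> (Sup (\<alpha> ` F))" by (simp add: a_Sup)
    also have "\<dots> = \<Union>(\<gamma> ` \<alpha> ` F)" using A unfolding additive_def by blast
    finally show "\<gamma> (\<alpha> (\<Union>F)) = \<Union>((\<lambda>S. \<gamma> (\<alpha> S)) ` F)" by (simp add: image_image)
  qed
next
  assume U: UP
  show "additive \<gamma>" unfolding additive_def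
  proof
    fix X :: "'b set"
    have "\<alpha> (\<Union>(\<gamma> ` X)) = Sup X" by (simp add: a_Sup image_image ag)
    then have "\<gamma> (Sup X) = \<gamma> (\<alpha> (\<Union>(\<gamma> ` X)))" by simp
    also have "\<dots> = \<Union>((\<lambda>S. \<gamma> (\<alpha> S)) ` \<gamma> ` X)" using U unfolding UP_def by blast
    finally show "\<gamma> (Sup X) = \<Union>(\<gamma> ` X)" by (simp add: image_image ag)
  qed
qed

lemma UP_pt: "UP \<Longrightarrow> \<gamma> (\<alpha> S) = (\<Union>s\<in>S. \<gamma> (\<alpha> {s}))"
proof -
  assume U: UP
  have "S = \<Union>((\<lambda>s. {s}) ` S)" by blast
  then have "\<gamma> (\<alpha> S) = \<gamma> (\<alpha> (\<Union>((\<lambda>s. {s}) ` S)))" by simp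
  also have "\<dots> = \<Union>((\<lambda>T. \<gamma> (\<alpha> T)) ` (\<lambda>s. {s}) ` S)" using U unfolding UP_def by blast
  finally show ?thesis by (simp add: image_image)
qed

abbreviation "PP \<equiv> range (\<lambda>s. \<gamma> (\<alpha> {s}))"

lemma pt_same: "partition_on UNIV PP \<Longrightarrow> x \<in> \<gamma> (\<alpha> {s}) \<Longrightarrow> \<gamma> (\<alpha> {x}) = \<gamma> (\<alpha> {s})"
  by (rule part_uniq[of UNIV PP _ _ x]) (use extc in auto)

lemma part_iff: "partitioning \<alpha> \<gamma> \<longleftrightarrow> UP \<and> partition_on UNIV PP"
proof
  assume "partitioning \<alpha> \<gamma>"
  then obtain P where P: "partition_on UNIV P" and E: "\<And>S. \<gamma> (\<alpha> S) = pad_closure P S"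
    unfolding partitioning_def closure_of_gi_def by (metis comp_apply)
  have UPv: UP unfolding UP_def E pad_closure_def by blast
  have blk: "\<gamma> (\<alpha> {s}) \<in> P \<and> s \<in> \<gamma> (\<alpha> {s})" for s
  proof -
    obtain B where B: "B \<in> P" "s \<in> B" using P partition_onD1 by blast
    have "pad_closure P {s} = B"
      unfolding pad_closure_def using B part_uniq[OF P] by blast
    then show ?thesis using E B by simp
  qed
  have "PP = P"
  proof
    show "PP \<subseteq> P" using blk by blast
    show "P \<subseteq> PP"
    proof
      fix B assume B: "B \<in> P"
      then obtain s where "s \<in> B" using partition_onD3[OF P] by (metis all_not_in_conv)
      then have "\<gamma> (\<alpha> {s}) = B" using blk part_uniq[OF P] B by blast
      then show "B \<in> PP" by blast
    qed
  qed
  then show "UP \<and> partition_on UNIV PP" using UPv P by simp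
next
  assume A: "UP \<and> partition_on UNIV PP"
  have eqS: "\<gamma> (\<alpha> S) = pad_closure PP S" for S
  proof -
    have "\<gamma> (\<alpha> S) = (\<Union>s\<in>S. \<gamma> (\<alpha> {s}))" using A UP_pt by blast
    also have "\<dots> = pad_closure PP S"
    proof
      show "(\<Union>s\<in>S. \<gamma> (\<alpha> {s})) \<subseteq> pad_closure PP S"
      proof
        fix x assume "x \<in> (\<Union>s\<in>S. \<gamma> (\<alpha> {s}))"
        then obtain s where s: "s \<in> S" "x \<in> \<gamma> (\<alpha> {s})" by blast
        have "\<gamma> (\<alpha> {s}) \<in> PP" by (rule rangeI)
        moreover have "s \<in> \<gamma> (\<alpha> {s})" using extc[of "{s}"] by blast
        ultimately have "\<gamma> (\<alpha> {s}) \<in> {B \<in> PP. B \<inter> S \<noteq> {}}" using s by blast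
        then show "x \<in> pad_closure PP S" unfolding pad_closure_def using s(2) by (rule UnionI)
      qed
      show "pad_closure PP S \<subseteq> (\<Union>s\<in>S. \<gamma> (\<alpha> {s}))"
      proof
        fix x assume "x \<in> pad_closure PP S"
        then obtain t s where "s \<in> S" "s \<in> \<gamma> (\<alpha> {t})" "x \<in> \<gamma> (\<alpha> {t})"
          unfolding pad_closure_def by blast
        then have "\<gamma> (\<alpha> {s}) = \<gamma> (\<alpha> {t})" using pt_same[OF conjunct2[OF A]] by blast
        then show "x \<in> (\<Union>s\<in>S. \<gamma> (\<alpha> {s}))" using \<open>s \<in> S\<close> \<open>x \<in> \<gamma> (\<alpha> {t})\<close> by blast
      qed
    qed
    finally show ?thesis .
  qed
  have "\<gamma> \<circ> \<alpha> = pad_closure PP"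
  proof
    fix S show "(\<gamma> \<circ> \<alpha>) S = pad_closure PP S" unfolding comp_apply by (rule eqS)
  qed
  then show "partitioning \<alpha> \<gamma>" unfolding partitioning_def closure_of_gi_def
    using conjunct2[OF A] by blast
qed

lemma par_eq: "partition_on UNIV PP \<Longrightarrow> par \<alpha> = PP"
proof -
  assume P: "partition_on UNIV PP"
  have "{s'. \<alpha> {s'} = \<alpha> {s}} = \<gamma> (\<alpha> {s})" for s
  proof
    show "{s'. \<alpha> {s'} = \<alpha> {s}} \<subseteq> \<gamma> (\<alpha> {s})"
    proof
      fix x assume "x \<in> {s'. \<alpha> {s'} = \<alpha> {s}}"
      then have "\<gamma> (\<alpha> {x}) = \<gamma> (\<alpha> {s})" by simp
      then show "x \<in> \<gamma> (\<alpha> {s})" using extc[of "{x}"] by blast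
    qed
    show "\<gamma> (\<alpha> {s}) \<subseteq> {s'. \<alpha> {s'} = \<alpha> {s}}"
    proof
      fix x assume "x \<in> \<gamma> (\<alpha> {s})"
      then have "\<gamma> (\<alpha> {x}) = \<gamma> (\<alpha> {s})" using pt_same[OF P] by blast
      then have "\<alpha> (\<gamma> (\<alpha> {x})) = \<alpha> (\<gamma> (\<alpha> {s}))" by simp
      then show "x \<in> {s'. \<alpha> {s'} = \<alpha> {s}}" by (simp add: ag)
    qed
  qed
  then show ?thesis unfolding par_def by auto
qed

lemma fc_iff: "forward_complete \<alpha> \<gamma> uminus \<longleftrightarrow> (\<forall>S. \<gamma> (\<alpha> (- \<gamma> (\<alpha> S))) = - \<gamma> (\<alpha> S))"
  unfolding forward_complete_def closure_of_gi_def by (auto simp: fun_eq_iff)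

lemma fc_part: "forward_complete \<alpha> \<gamma> uminus \<longleftrightarrow> partitioning \<alpha> \<gamma>"
proof
  assume "forward_complete \<alpha> \<gamma> uminus"
  then have C: "\<And>S. \<gamma> (\<alpha> (- \<gamma> (\<alpha> S))) = - \<gamma> (\<alpha> S)" using fc_iff by blast
  have inter: "\<gamma> (\<alpha> (\<Inter>G)) = \<Inter>G" if "\<forall>T\<in>G. \<gamma> (\<alpha> T) = T" for G
  proof
    show "\<gamma> (\<alpha> (\<Inter>G)) \<subseteq> \<Inter>G"
      using that mmono[of "\<Inter>G"] by blast
  qed (rule extc)
  have UPv: UP unfolding UP_def
  proof
    fix F :: "'a set set"
    let ?U = "\<Union>((\<lambda>S. \<gamma> (\<alpha> S)) ` F)"
    have "- ?U = \<Inter>((\<lambda>S. - \<gamma> (\<alpha> S)) ` F)" by blast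
    then have "\<gamma> (\<alpha> (- ?U)) = - ?U" using inter[of "(\<lambda>S. - \<gamma> (\<alpha> S)) ` F"] C by auto
    then have cl: "\<gamma> (\<alpha> ?U) = ?U" using C[of "- ?U"] by simp
    have "\<gamma> (\<alpha> (\<Union>F)) \<subseteq> ?U"
    proof -
      have "\<Union>F \<subseteq> ?U" using extc by blast
      then have "\<Union>F \<subseteq> \<gamma> (\<alpha> ?U)" using cl by simp
      then have "\<gamma> (\<alpha> (\<Union>F)) \<subseteq> \<gamma> (\<alpha> ?U)" by (rule closed_le)
      then show ?thesis using cl by simp
    qed
    moreover have "?U \<subseteq> \<gamma> (\<alpha> (\<Union>F))" using mmono by blast
    ultimately show "\<gamma> (\<alpha> (\<Union>F)) = ?U" by blast
  qed
  have key: "s \<in> \<gamma> (\<alpha> {x})" if "x \<in> \<gamma> (\<alpha> {s})" for s x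
  proof (rule ccontr)
    assume n: "s \<notin> \<gamma> (\<alpha> {x})"
    let ?D = "\<gamma> (\<alpha> {s}) \<inter> - \<gamma> (\<alpha> {x})"
    have "\<gamma> (\<alpha> ?D) = ?D" using inter[of "{\<gamma> (\<alpha> {s}), - \<gamma> (\<alpha> {x})}"] C idem by auto
    moreover have "{s} \<subseteq> ?D" using n extc by blast
    ultimately have "\<gamma> (\<alpha> {s}) \<subseteq> ?D" using closed_le by metis
    then show False using that extc by blast
  qed
  have "partition_on UNIV PP"
  proof (rule partition_onI)
    show "\<Union>PP = UNIV" using extc by blast
    show "{} \<notin> PP" using extc by blast
    fix p q assume "p \<in> PP" "q \<in> PP" "p \<noteq> q"
    then obtain s t where st: "p = \<gamma> (\<alpha> {s})" "q = \<gamma> (\<alpha> {t})" by blast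
    show "disjnt p q"
    proof (rule ccontr)
      assume "\<not> disjnt p q"
      then obtain x where x: "x \<in> p" "x \<in> q" unfolding disjnt_def by blast
      have "\<gamma> (\<alpha> {x}) = \<gamma> (\<alpha> {s})" if "x \<in> \<gamma> (\<alpha> {s})" for s
        using key[OF that] that closed_le by (meson empty_subsetI insert_subset subset_antisym)
      then show False using x st \<open>p \<noteq> q\<close> by metis
    qed
  qed
  then show "partitioning \<alpha> \<gamma>" using part_iff UPv by blast
next
  assume "partitioning \<alpha> \<gamma>"
  then obtain P where P: "partition_on UNIV P" and E: "\<And>S. \<gamma> (\<alpha> S) = pad_closure P S"
    unfolding partitioning_def closure_of_gi_def by (metis comp_apply)
  have "pad_closure P (- pad_closure P S) = - pad_closure P S" for S
  proof
    show "pad_closure P (- pad_closure P S) \<subseteq> - pad_closure P S"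
    proof
      fix x assume "x \<in> pad_closure P (- pad_closure P S)"
      then obtain B y where B: "B \<in> P" "x \<in> B" "y \<in> B" "y \<notin> pad_closure P S"
        unfolding pad_closure_def by blast
      show "x \<in> - pad_closure P S"
      proof
        assume "x \<in> pad_closure P S"
        then obtain B' where B': "B' \<in> P" "x \<in> B'" "B' \<inter> S \<noteq> {}"
          unfolding pad_closure_def by blast
        have "B = B'" using part_uniq[OF P B(1) B'(1) B(2) B'(2)] .
        then have "y \<in> pad_closure P S" unfolding pad_closure_def using B B' by blast
        then show False using B(4) by blast
      qed
    qed
    show "- pad_closure P S \<subseteq> pad_closure P (- pad_closure P S)"
    proof
      fix x assume x: "x \<in> - pad_closure P S"
      obtain B where B: "B \<in> P" "x \<in> B" using partition_onD1[OF P] by blast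
      have "B \<in> {B' \<in> P. B' \<inter> (- pad_closure P S) \<noteq> {}}" using B x by blast
      then have "x \<in> \<Union>{B' \<in> P. B' \<inter> (- pad_closure P S) \<noteq> {}}" using B(2) by (rule UnionI)
      then show "x \<in> pad_closure P (- pad_closure P S)"
        by (simp only: pad_closure_def[of P "- pad_closure P S"])
    qed
  qed
  then show "forward_complete \<alpha> \<gamma> uminus" using fc_iff E by simp
qed

end

theorem corollary3p2:
  fixes \<alpha> :: "'a set \<Rightarrow> 'b::complete_lattice" and \<gamma> :: "'b \<Rightarrow> 'a set"
  assumes "galois_insertion \<alpha> \<gamma>"
  shows "(partitioning \<alpha> \<gamma> \<longleftrightarrow>
            additive \<gamma> \<and> partition_on UNIV (range (\<lambda>s. \<gamma> (\<alpha> {s})))) \<and>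
         (additive \<gamma> \<and> partition_on UNIV (range (\<lambda>s. \<gamma> (\<alpha> {s})))
            \<longrightarrow> par \<alpha> = range (\<lambda>s. \<gamma> (\<alpha> {s}))) \<and>
         (partitioning \<alpha> \<gamma> \<longleftrightarrow> forward_complete \<alpha> \<gamma> uminus)"
proof -
  interpret gi \<alpha> \<gamma> using assms by unfold_locales
  show ?thesis using part_iff add_UP par_eq fc_part by blast
qed

end
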